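(* Let $c_1,c_2\in\mathbb N$ be absolute constants such that $e(c_1m,{\rm APP}_{\infty,d};\Lambda^{\rm std})\le c_2\,e(m,{\rm APP}_{\infty,d};\Lambda^{\rm all})$ for all $d,m\in\mathbb N$ and all admissible weight functions $\omega$ (such constants exist). Then for $\star\in\{{\rm ABS},{\rm NOR}\}$, all $d\in\mathbb N$ and all $\varepsilon\in(0,1)$, $$ n^\star(\varepsilon,d;\Lambda^{\rm std})\le 2c_1\, n^\star\big(\varepsilon/c_2,d;\Lambda^{\rm all}\big).$$
   Context: $\mathbb T^d=[0,1]^d$ is the torus with Lebesgue measure; $\hat f(\mathbf k)=\int_{\mathbb T^d}f(\mathbf x)e^{-2\pi i\mathbf k\cdot\mathbf x}d\mathbf x$. For each $d$ an admissible weight is a function $\omega:\mathbb Z^d\to(0,\infty)$ with $\sum_{\mathbf k}\omega(\mathbf k)^{-2}<\infty$; $H^\omega(\mathbb T^d)$ is the Hilbert space of $f\in L_2(\mathbb T^d)$ with $\|f\|^2=\sum_{\mathbf k}|\hat f(\mathbf k)|^2\omega(\mathbf k)^2<\infty$, a reproducing kernel Hilbert space of continuous functions. ${\rm APP}_{\infty,d}:H^\omega(\mathbb T^d)\to L_\infty(\mathbb T^d)$ (sup norm), $f\mapsto f$. $\Lambda^{\rm all}$: all continuous linear functionals; $\Lambda^{\rm std}$: point evaluations. $e(n,{\rm APP}_{\infty,d};\Lambda)$ is the infimum over algorithms $A(f)=\phi(L_1f,\dots,L_nf)$, $L_i\in\Lambda$, $\phi$ arbitrary, of $\sup_{\|f\|\le1}\|f-A(f)\|_\infty$;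 for $n=0$, $A=0$ and $e(0,{\rm APP}_{\infty,d})=\sup_{\|f\|\le1}\|f\|_\infty=(\sum_k\lambda_{k,d})^{1/2}$, where $\lambda_{k,d}$ is the nonincreasing rearrangement of $\omega(\mathbf k)^{-2}$. Information complexity: $n^\star(\varepsilon,d;\Lambda)=\inf\{n\ge0: e(n,{\rm APP}_{\infty,d};\Lambda)\le\varepsilon\,{\rm CRI}_d\}$ with ${\rm CRI}_d=1$ for $\star={\rm ABS}$ and ${\rm CRI}_d=e(0,{\rm APP}_{\infty,d})$ for $\star={\rm NOR}$. *)

theory Defs
  imports "HOL-Analysis.Analysis" "HOL-Probability.Essential_Supremum"
begin

text \<open>Frequencies in Z^d: extensional functions on {..<d}. Points of the torus [0,1]^d likewise.\<close>

definition lattice :: "nat \<Rightarrow> (nat \<Rightarrow> int) set" where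
  "lattice d = ({..<d} \<rightarrow>\<^sub>E (UNIV :: int set))"

definition torus :: "nat \<Rightarrow> (nat \<Rightarrow> real) set" where
  "torus d = ({..<d} \<rightarrow>\<^sub>E {0..1::real})"

definition torus_measure :: "nat \<Rightarrow> (nat \<Rightarrow> real) measure" where
  "torus_measure d = PiM {..<d} (\<lambda>_. lebesgue_on {0..1::real})"

definition dotp :: "nat \<Rightarrow> (nat \<Rightarrow> int) \<Rightarrow> (nat \<Rightarrow> real) \<Rightarrow> real" where
  "dotp d k x = (\<Sum>j<d. real_of_int (k j) * x j)"

definition admissible :: "nat \<Rightarrow> ((nat \<Rightarrow> int) \<Rightarrow> real) \<Rightarrow> bool" where
  "admissible d \<omega> \<longleftrightarrow> (\<forall>k\<in>lattice d. \<omega> k > 0) \<and>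
     (\<lambda>k. 1 / (\<omega> k)\<^sup>2) summable_on lattice d"

text \<open>Elements of H^omega(T^d), represented by their Fourier coefficient families.\<close>
definition Hspace :: "((nat \<Rightarrow> int) \<Rightarrow> real) \<Rightarrow> nat \<Rightarrow> ((nat \<Rightarrow> int) \<Rightarrow> complex) set" where
  "Hspace \<omega> d = {a. (\<forall>k. k \<notin> lattice d \<longrightarrow> a k = 0) \<and>
     (\<lambda>k. (cmod (a k))\<^sup>2 * (\<omega> k)\<^sup>2) summable_on lattice d}"

definition Hnorm :: "((nat \<Rightarrow> int) \<Rightarrow> real) \<Rightarrow> nat \<Rightarrow> ((nat \<Rightarrow> int) \<Rightarrow> complex) \<Rightarrow> real" where
  "Hnorm \<omega> d a = sqrt (\<Sum>\<^sub>\<infinity>k\<in>lattice d. (cmod (a k))\<^sup>2 * (\<omega> k)\<^sup>2)"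

definition evalf :: "nat \<Rightarrow> ((nat \<Rightarrow> int) \<Rightarrow> complex) \<Rightarrow> (nat \<Rightarrow> real) \<Rightarrow> complex" where
  "evalf d a x = (\<Sum>\<^sub>\<infinity>k\<in>lattice d. a k * exp (2 * pi * \<i> * complex_of_real (dotp d k x)))"

definition Lambda_all :: "((nat \<Rightarrow> int) \<Rightarrow> real) \<Rightarrow> nat \<Rightarrow> (((nat \<Rightarrow> int) \<Rightarrow> complex) \<Rightarrow> complex) set" where
  "Lambda_all \<omega> d = {L. (\<forall>a\<in>Hspace \<omega> d. \<forall>b\<in>Hspace \<omega> d. L (\<lambda>k. a k + b k) = L a + L b) \<and>
     (\<forall>c. \<forall>a\<in>Hspace \<omega> d. L (\<lambda>k. c * a k) = c * L a) \<and>
     (\<exists>C. \<forall>a\<in>Hspace \<omega> d. cmod (L a) \<le> C * Hnorm \<omega> d a)}"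

definition Lambda_std :: "nat \<Rightarrow> (((nat \<Rightarrow> int) \<Rightarrow> complex) \<Rightarrow> complex) set" where
  "Lambda_std d = {(\<lambda>a. evalf d a x) | x. x \<in> torus d}"

definition alg_err :: "((nat \<Rightarrow> int) \<Rightarrow> real) \<Rightarrow> nat \<Rightarrow> (((nat \<Rightarrow> int) \<Rightarrow> complex) \<Rightarrow> complex) list
     \<Rightarrow> (complex list \<Rightarrow> (nat \<Rightarrow> real) \<Rightarrow> complex) \<Rightarrow> ereal" where
  "alg_err \<omega> d Ls \<phi> = (SUP a\<in>{a\<in>Hspace \<omega> d. Hnorm \<omega> d a \<le> 1}.
      esssup (torus_measure d) (\<lambda>x. ereal (cmod (evalf d a x - \<phi> (map (\<lambda>L. L a) Ls) x))))"

definition min_err :: "((nat \<Rightarrow> int) \<Rightarrow> real) \<Rightarrow> nat \<Rightarrow> (((nat \<Rightarrow> int) \<Rightarrow> complex) \<Rightarrow> complex) set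
     \<Rightarrow> nat \<Rightarrow> ereal" where
  "min_err \<omega> d \<Lambda> n = (INF p\<in>{(Ls, \<phi>). length Ls = n \<and> set Ls \<subseteq> \<Lambda> \<and>
        (\<forall>y. \<phi> y \<in> borel_measurable (torus_measure d)) \<and> (n = 0 \<longrightarrow> \<phi> = (\<lambda>_ _. 0))}.
      alg_err \<omega> d (fst p) (snd p))"

datatype setting = ABS | NOR

definition CRI :: "((nat \<Rightarrow> int) \<Rightarrow> real) \<Rightarrow> nat \<Rightarrow> setting \<Rightarrow> ereal" where
  "CRI \<omega> d s = (case s of ABS \<Rightarrow> 1 | NOR \<Rightarrow> min_err \<omega> d {} 0)"

text \<open>Information complexity (infinite if no n works).\<close>
definition info_compl :: "((nat \<Rightarrow> int) \<Rightarrow> real) \<Rightarrow> nat \<Rightarrow> (((nat \<Rightarrow> int) \<Rightarrow> complex) \<Rightarrow> complex) set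
     \<Rightarrow> setting \<Rightarrow> real \<Rightarrow> enat" where
  "info_compl \<omega> d \<Lambda> s \<epsilon> = (INF n\<in>{n. min_err \<omega> d \<Lambda> n \<le> ereal \<epsilon> * CRI \<omega> d s}. enat n)"

end

theory Submission
  imports Defs
begin

lemma min_err_zero_eq: "min_err \<omega> d \<Lambda> 0 = alg_err \<omega> d [] (\<lambda>_ _. 0)"
proof -
  have "{(Ls, \<phi>). length Ls = 0 \<and> set Ls \<subseteq> \<Lambda> \<and>
        (\<forall>y. \<phi> y \<in> borel_measurable (torus_measure d)) \<and> (0 = (0::nat) \<longrightarrow> \<phi> = (\<lambda>_ _. 0))}
      = {([], (\<lambda>(_::complex list) (_::nat\<Rightarrow>real). 0::complex))}" (is "?A = ?B")
  proof
    show "?A \<subseteq> ?B"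
    proof
      fix p assume "p \<in> ?A"
      then obtain Ls \<phi> where p: "p = (Ls, \<phi>)" and "length Ls = 0" and "\<phi> = (\<lambda>_ _. 0)"
        by blast
      then show "p \<in> ?B" by simp
    qed
    have m: "\<forall>y. (\<lambda>_. 0::complex) \<in> borel_measurable (torus_measure d)" by simp
    then show "?B \<subseteq> ?A" by simp
  qed
  then show ?thesis unfolding min_err_def by simp
qed

lemma min_err_zero_indep: "min_err \<omega> d \<Lambda> 0 = min_err \<omega> d \<Lambda>' 0"
  by (simp add: min_err_zero_eq)

lemma ereal_alg:
  fixes E :: ereal and t e :: real
  assumes "0 < t" "t < 1" "0 < e" "e < 1" "E \<le> ereal t * E"
  shows "E \<le> ereal e * E"
proof (cases E)
  case (real r)
  with assms have "r \<le> t * r" by simp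
  have "r \<le> 0"
  proof (rule ccontr)
    assume "\<not> r \<le> 0"
    then have "t * r < 1 * r" using assms by (intro mult_strict_right_mono) auto
    with \<open>r \<le> t * r\<close> show False by simp
  qed
  then have "1 * r \<le> e * r" using assms by (intro mult_right_mono_neg) auto
  then have "r \<le> e * r" by simp
  then show ?thesis using real by simp
qed (use assms in auto)

theorem theorem2p3:
  fixes c1 c2 :: nat
  assumes "c1 \<ge> 1" and "c2 \<ge> 1"
    and hyp: "\<forall>d m \<omega>. d \<ge> 1 \<longrightarrow> m \<ge> 1 \<longrightarrow> admissible d \<omega> \<longrightarrow>
       min_err \<omega> d (Lambda_std d) (c1 * m) \<le> ereal (real c2) * min_err \<omega> d (Lambda_all \<omega> d) m"
  shows "\<forall>s d \<omega> \<epsilon>. d \<ge> 1 \<longrightarrow> admissible d \<omega> \<longrightarrow> 0 < \<epsilon> \<longrightarrow> \<epsilon> < 1 \<longrightarrow>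
     info_compl \<omega> d (Lambda_std d) s \<epsilon>
       \<le> enat (2 * c1) * info_compl \<omega> d (Lambda_all \<omega> d) s (\<epsilon> / real c2)"
proof (intro allI impI)
  fix s d \<omega> and \<epsilon> :: real
  assume d: "d \<ge> 1" and adm: "admissible d \<omega>" and e0: "0 < \<epsilon>" and e1: "\<epsilon> < 1"
  define S where "S = {n. min_err \<omega> d (Lambda_all \<omega> d) n \<le> ereal (\<epsilon> / real c2) * CRI \<omega> d s}"
  define T where "T = {n. min_err \<omega> d (Lambda_std d) n \<le> ereal \<epsilon> * CRI \<omega> d s}"
  have c2pos: "real c2 > 0" using assms(2) by simp
  show "info_compl \<omega> d (Lambda_std d) s \<epsilon>
       \<le> enat (2 * c1) * info_compl \<omega> d (Lambda_all \<omega> d) s (\<epsilon> / real c2)"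
  proof (cases "S = {}")
    case True
    have "info_compl \<omega> d (Lambda_all \<omega> d) s (\<epsilon> / real c2) = \<infinity>"
      unfolding info_compl_def S_def[symmetric] True by (simp add: top_enat_def)
    moreover have "enat (2 * c1) * \<infinity> = \<infinity>" using assms(1) by (simp add: imult_is_infinity)
    ultimately show ?thesis by simp
  next
    case False
    define m where "m = (LEAST n. n \<in> S)"
    have mS: "m \<in> S" using False m_def by (metis LeastI ex_in_conv)
    have "info_compl \<omega> d (Lambda_all \<omega> d) s (\<epsilon> / real c2) = enat m"
      unfolding info_compl_def S_def[symmetric]
    proof (rule antisym)
      show "(INF n\<in>S. enat n) \<le> enat m" using mS by (rule INF_lower)
      show "enat m \<le> (INF n\<in>S. enat n)"
        by (rule INF_greatest) (simp add: m_def Least_le)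
    qed
    moreover have "info_compl \<omega> d (Lambda_std d) s \<epsilon> \<le> enat (c1 * m)"
    proof (cases "m = 0")
      case True
      have "min_err \<omega> d (Lambda_std d) 0 \<le> ereal \<epsilon> * CRI \<omega> d s"
      proof (cases s)
        case ABS
        have "min_err \<omega> d (Lambda_std d) 0 \<le> ereal (\<epsilon> / real c2)"
          using mS True ABS min_err_zero_indep[of \<omega> d "Lambda_std d" "Lambda_all \<omega> d"]
          by (simp add: S_def CRI_def)
        also have "\<dots> \<le> ereal \<epsilon>" using c2pos e0 assms(2)
          by (simp add: divide_le_eq)
        finally show ?thesis using ABS by (simp add: CRI_def)
      next
        case NOR
        have "min_err \<omega> d {} 0 \<le> ereal (\<epsilon> / real c2) * min_err \<omega> d {} 0"
          using mS True NOR min_err_zero_indep[of \<omega> d "Lambda_all \<omega> d" "{}"]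
          by (simp add: S_def CRI_def)
        then have "min_err \<omega> d {} 0 \<le> ereal \<epsilon> * min_err \<omega> d {} 0"
        proof (rule ereal_alg[rotated 4])
          show "0 < \<epsilon> / real c2" using c2pos e0 by simp
          show "\<epsilon> / real c2 < 1" using c2pos e0 e1 assms(2)
            by (simp add: divide_less_eq)
        qed (use e0 e1 in auto)
        then show ?thesis using NOR min_err_zero_indep[of \<omega> d "Lambda_std d" "{}"]
          by (simp add: CRI_def)
      qed
      then have "0 \<in> T" by (simp add: T_def)
      then show ?thesis unfolding info_compl_def T_def[symmetric] using True
        by (metis INF_lower mult_0_right)
    next
      case False
      have "min_err \<omega> d (Lambda_std d) (c1 * m) \<le> ereal (real c2) * min_err \<omega> d (Lambda_all \<omega> d) m"
        using hyp d adm False by simp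
      also have "\<dots> \<le> ereal (real c2) * (ereal (\<epsilon> / real c2) * CRI \<omega> d s)"
        using mS by (intro ereal_mult_left_mono) (auto simp: S_def)
      also have "\<dots> = ereal \<epsilon> * CRI \<omega> d s"
        using c2pos by (simp add: mult.assoc[symmetric])
      finally have "c1 * m \<in> T" by (simp add: T_def)
      then show ?thesis unfolding info_compl_def T_def[symmetric] by (rule INF_lower)
    qed
    moreover have "enat (c1 * m) \<le> enat (2 * c1) * enat m" by simp
    ultimately show ?thesis
      by (metis (no_types, lifting) order_trans)
  qed
qed

end
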